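(* Let $G$ be a complete geometric graph and let $B$ be a blocker for $\mathcal{T}_{\leq 3}(G)$. Let $a,b$ be two leaves of $B$ with leaf edges $[a,c]$ and $[b,d]$, respectively. If $a,b,c,d$ are mutually distinct, then $a,b,d,c$ are in convex position and, in this cyclic order, are the vertices of a convex quadrilateral (i.e., its sides are $[a,b],[b,d],[d,c],[c,a]$).
   Context: A geometric graph is a graph whose vertices are points in the plane in general position (no three collinear) and whose edges are straight segments between pairs of vertices; $G$ is complete if all pairs of vertices are joined. $\mathcal{T}_{\leq k}(G)$ denotes the family of all simple (non-crossing) spanning trees of $G$ of (graph) diameter at most $k$. A subgraph $B$ blocks a family $\mathcal{F}$ of subgraphs if it shares at least one edge with every member of $\mathcal{F}$; a blocker of $\mathcal{F}$ is a subgraph that blocks $\mathcal{F}$ and has the smallest possible number of edges among all subgraphs blocking $\mathcal{F}$. A leaf of $B$ is a vertex of degree 1 in $B$, and its leaf edge is the unique edge of $B$ containing it. *)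

theory Defs
  imports "HOL-Analysis.Analysis"
begin

type_synonym point = "real \<times> real"

definition general_position :: "point set \<Rightarrow> bool" where
  "general_position P \<longleftrightarrow>
     (\<forall>x\<in>P. \<forall>y\<in>P. \<forall>z\<in>P. x \<noteq> y \<and> y \<noteq> z \<and> x \<noteq> z \<longrightarrow> \<not> collinear {x, y, z})"

text \<open>Edge set of the complete geometric graph on P; an edge is a 2-element set of vertices,
  drawn as the straight segment between them.\<close>
definition complete_edges :: "point set \<Rightarrow> point set set" where
  "complete_edges P = {{u, v} | u v. u \<in> P \<and> v \<in> P \<and> u \<noteq> v}"

definition seg :: "point set \<Rightarrow> point set" where
  "seg e = (\<Union>u\<in>e. \<Union>v\<in>e. closed_segment u v)"

definition crossing :: "point set \<Rightarrow> point set \<Rightarrow> bool" where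
  "crossing e f \<longleftrightarrow> \<not> (seg e \<inter> seg f \<subseteq> e \<inter> f)"

definition simple_graph :: "point set set \<Rightarrow> bool" where
  "simple_graph T \<longleftrightarrow> (\<forall>e\<in>T. \<forall>f\<in>T. e \<noteq> f \<longrightarrow> \<not> crossing e f)"

definition walk :: "point set set \<Rightarrow> point list \<Rightarrow> bool" where
  "walk T xs \<longleftrightarrow> xs \<noteq> [] \<and> (\<forall>i. Suc i < length xs \<longrightarrow> {xs ! i, xs ! Suc i} \<in> T)"

definition connected_on :: "point set \<Rightarrow> point set set \<Rightarrow> bool" where
  "connected_on P T \<longleftrightarrow>
     (\<forall>u\<in>P. \<forall>v\<in>P. \<exists>xs. walk T xs \<and> hd xs = u \<and> last xs = v)"

definition has_cycle :: "point set set \<Rightarrow> bool" where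
  "has_cycle T \<longleftrightarrow>
     (\<exists>xs. length xs \<ge> 3 \<and> distinct xs \<and> walk T xs \<and> {last xs, hd xs} \<in> T)"

definition spanning_tree :: "point set \<Rightarrow> point set set \<Rightarrow> bool" where
  "spanning_tree P T \<longleftrightarrow> T \<subseteq> complete_edges P \<and> connected_on P T \<and> \<not> has_cycle T"

definition diameter_le :: "point set \<Rightarrow> point set set \<Rightarrow> nat \<Rightarrow> bool" where
  "diameter_le P T k \<longleftrightarrow>
     (\<forall>u\<in>P. \<forall>v\<in>P. \<exists>xs. walk T xs \<and> hd xs = u \<and> last xs = v \<and> length xs \<le> k + 1)"

definition simple_trees_le :: "point set \<Rightarrow> nat \<Rightarrow> point set set set" where
  "simple_trees_le P k =
     {T. spanning_tree P T \<and> simple_graph T \<and> diameter_le P T k}"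

definition blocks :: "point set set \<Rightarrow> point set set set \<Rightarrow> bool" where
  "blocks B F \<longleftrightarrow> (\<forall>T\<in>F. B \<inter> T \<noteq> {})"

definition blocker :: "point set \<Rightarrow> point set set \<Rightarrow> point set set set \<Rightarrow> bool" where
  "blocker P B F \<longleftrightarrow> B \<subseteq> complete_edges P \<and> blocks B F \<and>
     (\<forall>B'. B' \<subseteq> complete_edges P \<and> blocks B' F \<longrightarrow> card B \<le> card B')"

definition degree :: "point set set \<Rightarrow> point \<Rightarrow> nat" where
  "degree B v = card {e\<in>B. v \<in> e}"

definition leaf :: "point set set \<Rightarrow> point \<Rightarrow> bool" where
  "leaf B v \<longleftrightarrow> degree B v = 1"

text \<open>Orientation (signed area) of the triple p q r.\<close>
definition orient :: "point \<Rightarrow> point \<Rightarrow> point \<Rightarrow> real" where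
  "orient p q r = (fst q - fst p) * (snd r - snd p) - (snd q - snd p) * (fst r - fst p)"

definition convex_position :: "point set \<Rightarrow> bool" where
  "convex_position S \<longleftrightarrow> (\<forall>x\<in>S. x \<notin> convex hull (S - {x}))"

definition same_side :: "point \<Rightarrow> point \<Rightarrow> point \<Rightarrow> point \<Rightarrow> bool" where
  "same_side p q r s \<longleftrightarrow> orient p q r * orient p q s > 0"

definition convex_quadrilateral :: "point \<Rightarrow> point \<Rightarrow> point \<Rightarrow> point \<Rightarrow> bool" where
  "convex_quadrilateral p1 p2 p3 p4 \<longleftrightarrow>
     distinct [p1, p2, p3, p4] \<and> convex_position {p1, p2, p3, p4} \<and>
     same_side p1 p2 p3 p4 \<and> same_side p2 p3 p4 p1 \<and>
     same_side p3 p4 p1 p2 \<and> same_side p4 p1 p2 p3"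

end

theory Submission
  imports Defs
begin


lemma orient_cyc: "orient p q r = orient q r p"
  by (simp add: orient_def algebra_simps)
lemma orient_swap: "orient p r q = - orient p q r"
  by (simp add: orient_def algebra_simps)
lemma orient_same[simp]: "orient p q p = 0" "orient p q q = 0" "orient p p q = 0"
  by (simp_all add: orient_def)

lemma orient_affine:
  "orient q r ((1 - t) *\<^sub>R u + t *\<^sub>R v) = (1 - t) * orient q r u + t * orient q r v"
  by (simp add: orient_def algebra_simps)

lemma orient_affine3:
  assumes "x + y + z = 1"
  shows "orient q r (x *\<^sub>R u + y *\<^sub>R v + z *\<^sub>R w) = x * orient q r u + y * orient q r v + z * orient q r w"
proof -
  have z: "z = 1 - x - y" using assms by simp
  show ?thesis unfolding z by (simp add: orient_def algebra_simps)
qed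

lemma orient0_collinear:
  assumes "orient x y z = 0" "x \<noteq> z"
  shows "collinear {x, y, z}"
proof -
  define v1 where "v1 = fst x - fst z"
  define v2 where "v2 = snd x - snd z"
  define w1 where "w1 = fst y - fst z"
  define w2 where "w2 = snd y - snd z"
  have cr: "v1 * w2 - v2 * w1 = 0" using assms(1) unfolding v1_def v2_def w1_def w2_def orient_def
    by (simp add: algebra_simps)
  have nz: "v1 \<noteq> 0 \<or> v2 \<noteq> 0" using assms(2) unfolding v1_def v2_def by (auto simp: prod_eq_iff)
  obtain u where u1: "w1 = u * v1" and u2: "w2 = u * v2"
  proof (cases "v1 = 0")
    case True
    then have "v2 \<noteq> 0" using nz by simp
    then show ?thesis using True cr by (intro that[of "w2 / v2"]) (auto simp: field_simps)
  next
    case False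
    then show ?thesis using cr by (intro that[of "w1 / v1"]) (auto simp: field_simps)
  qed
  have "y = u *\<^sub>R x + (1 - u) *\<^sub>R z"
    using u1 u2 unfolding v1_def v2_def w1_def w2_def by (simp add: prod_eq_iff algebra_simps)
  then show ?thesis by (auto simp: collinear_3_expand)
qed

lemma gp_orient:
  assumes "general_position P" "x \<in> P" "y \<in> P" "z \<in> P" "x \<noteq> y" "y \<noteq> z" "x \<noteq> z"
  shows "orient x y z \<noteq> 0"
  using assms orient0_collinear unfolding general_position_def by blast

lemma seg_pair: "seg {u, v} = closed_segment u v"
  by (auto simp: seg_def closed_segment_commute)

lemma in_seg: assumes "p \<in> closed_segment u v"
  obtains t where "0 \<le> t" "t \<le> 1" "p = (1 - t) *\<^sub>R u + t *\<^sub>R v"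
  using assms unfolding closed_segment_def by auto

lemma seg_fan:
  assumes "orient u v w \<noteq> 0"
  shows "closed_segment u v \<inter> closed_segment u w \<subseteq> {u}"
proof
  fix p assume p: "p \<in> closed_segment u v \<inter> closed_segment u w"
  obtain s where s: "p = (1 - s) *\<^sub>R u + s *\<^sub>R v" using p by (auto elim: in_seg)
  obtain t where t: "p = (1 - t) *\<^sub>R u + t *\<^sub>R w" using p by (auto elim: in_seg)
  have "orient u v p = 0" unfolding s orient_affine by simp
  moreover have "orient u v p = t * orient u v w" unfolding t orient_affine by simp
  ultimately have "t = 0" using assms by simp
  then show "p \<in> {u}" using t by simp
qed

lemma seg_opp:
  assumes "orient a b x * orient a b y < 0" "a \<noteq> b"
  shows "closed_segment a x \<inter> closed_segment b y = {}"
proof (rule ccontr)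
  assume "closed_segment a x \<inter> closed_segment b y \<noteq> {}"
  then obtain p where p: "p \<in> closed_segment a x" "p \<in> closed_segment b y" by blast
  obtain s where s: "0 \<le> s" "p = (1 - s) *\<^sub>R a + s *\<^sub>R x" using p by (auto elim: in_seg)
  obtain t where t: "0 \<le> t" "p = (1 - t) *\<^sub>R b + t *\<^sub>R y" using p by (auto elim: in_seg)
  have e1: "orient a b p = s * orient a b x" unfolding s orient_affine by simp
  have e2: "orient a b p = t * orient a b y" unfolding t orient_affine by simp
  have "s * orient a b x = t * orient a b y" using e1 e2 by simp
  have "s = 0 \<and> t = 0"
  proof -
    let ?X = "orient a b x" and ?Y = "orient a b y"
    have eq: "s * (?X * ?Y) = t * (?Y * ?Y)"
      using \<open>s * orient a b x = t * orient a b y\<close> by (metis mult.assoc)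
    have h1: "s * (?X * ?Y) \<le> 0" using s(1) assms(1) by (simp add: mult_nonneg_nonpos)
    have h2: "t * (?Y * ?Y) \<ge> 0" using t(1) by simp
    have "s * (?X * ?Y) = 0" "t * (?Y * ?Y) = 0" using h1 h2 eq by linarith+
    moreover have "?X * ?Y \<noteq> 0" "?Y * ?Y \<noteq> 0" using assms(1) by auto
    ultimately show ?thesis by simp
  qed
  then show False using s t assms(2) by simp
qed

lemma seg_cross:
  assumes "k * orient a b x > 0" "k * orient a b y > 0" "orient a x y \<noteq> 0"
    "p \<in> closed_segment a x" "p \<in> closed_segment b y"
  shows "k * orient a x y > 0"
proof -
  obtain s where s: "p = (1 - s) *\<^sub>R a + s *\<^sub>R x" using assms by (auto elim: in_seg)
  obtain t where t: "0 \<le> t" "t \<le> 1" "p = (1 - t) *\<^sub>R b + t *\<^sub>R y" using assms by (auto elim: in_seg)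
  have "orient a x p = 0" unfolding s orient_affine by simp
  moreover have "orient a x p = (1 - t) * orient a x b + t * orient a x y" unfolding t orient_affine by simp
  moreover have "orient a x b = - orient a b x" by (rule orient_swap)
  ultimately have h: "t * orient a x y = (1 - t) * orient a b x"
    by (simp add: algebra_simps)
  have "t * (k * orient a x y) = k * (t * orient a x y)" by (simp add: ac_simps)
  also have "\<dots> = k * ((1 - t) * orient a b x)" using h by simp
  also have "\<dots> = (1 - t) * (k * orient a b x)" by (simp add: ac_simps)
  finally have eq: "t * (k * orient a x y) = (1 - t) * (k * orient a b x)" .
  have "t \<noteq> 0" using eq assms(1) by auto
  then have tp: "t > 0" using t by simp
  have "(1 - t) * (k * orient a b x) \<ge> 0" using t assms(1) by simp
  then have "t * 0 \<le> t * (k * orient a x y)" using eq by (simp only: mult_zero_right)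
  then have "k * orient a x y \<ge> 0" using mult_le_cancel_left_pos[OF tp] by blast
  moreover have "k \<noteq> 0" using assms(1) by auto
  ultimately show ?thesis using assms(3) by (simp add: order_le_less)
qed

lemma orient_trans:
  assumes "k * orient a b d > 0" "k * orient a b x > 0" "k * orient a b y > 0"
    "k * orient a d x > 0" "k * orient a x y > 0"
  shows "k * orient a d y > 0"
proof -
  have id: "orient a d x * orient a b y + orient a x y * orient a b d + orient a y d * orient a b x = 0"
    by (simp add: orient_def algebra_simps)
  have "(k * orient a d x) * (k * orient a b y) > 0" using assms by simp
  moreover have "(k * orient a x y) * (k * orient a b d) > 0" using assms by simp
  moreover have "(k * orient a d x) * (k * orient a b y) + (k * orient a x y) * (k * orient a b d)
     + (k * orient a y d) * (k * orient a b x) = 0"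
  proof -
    have "(k * orient a d x) * (k * orient a b y) + (k * orient a x y) * (k * orient a b d)
     + (k * orient a y d) * (k * orient a b x) = (k * k) * (orient a d x * orient a b y + orient a x y * orient a b d + orient a y d * orient a b x)"
      by (simp add: algebra_simps)
    then show ?thesis using id by simp
  qed
  ultimately have "(k * orient a y d) * (k * orient a b x) < 0" by linarith
  then have "k * orient a y d < 0" using assms(2)
    by (metis mult_nonneg_nonneg not_le order_less_imp_le)
  moreover have "orient a d y = - orient a y d" by (rule orient_swap)
  ultimately show ?thesis by simp
qed



definition dstar :: "point \<Rightarrow> point \<Rightarrow> point set \<Rightarrow> point set \<Rightarrow> point set set" where
  "dstar a b A P = insert {a,b} ((\<lambda>x. {a,x}) ` A \<union> (\<lambda>y. {b,y}) ` (P - {a,b} - A))"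

lemma walk1: "walk T [x]" by (simp add: walk_def)
lemma walk2: "{x,y} \<in> T \<Longrightarrow> walk T [x,y]" by (simp add: walk_def)
lemma walk3: "{x,y} \<in> T \<Longrightarrow> {y,z} \<in> T \<Longrightarrow> walk T [x,y,z]"
  by (auto simp add: walk_def less_Suc_eq nth_Cons split: nat.splits)
lemma walk4: "{w,x} \<in> T \<Longrightarrow> {x,y} \<in> T \<Longrightarrow> {y,z} \<in> T \<Longrightarrow> walk T [w,x,y,z]"
  by (auto simp add: walk_def less_Suc_eq nth_Cons split: nat.splits)

lemma dstar_edge:
  assumes "e \<in> dstar a b A P" "v \<in> e" "v \<noteq> a" "v \<noteq> b" "A \<subseteq> P - {a,b}"
  shows "(v \<in> A \<and> e = {a,v}) \<or> (v \<in> P - {a,b} - A \<and> e = {b,v})"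
  using assms unfolding dstar_def by auto

lemma dstar_nb:
  assumes "{v,w} \<in> dstar a b A P" "v \<noteq> a" "v \<noteq> b" "A \<subseteq> P - {a,b}"
  shows "w = (if v \<in> A then a else b)"
proof -
  have "(v \<in> A \<and> {v,w} = {a,v}) \<or> (v \<in> P - {a,b} - A \<and> {v,w} = {b,v})"
    using dstar_edge[OF assms(1) _ assms(2,3,4)] by simp
  then show ?thesis using assms(2,3) by (auto simp: doubleton_eq_iff)
qed

lemma dstar_nocycle:
  assumes "A \<subseteq> P - {a,b}"
  shows "\<not> has_cycle (dstar a b A P)"
proof
  let ?T = "dstar a b A P"
  assume "has_cycle ?T"
  then obtain xs where len: "length xs \<ge> 3" and dis: "distinct xs" and w: "walk ?T xs"
    and cl: "{last xs, hd xs} \<in> ?T" unfolding has_cycle_def by blast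
  define n where "n = length xs"
  have n3: "n \<ge> 3" using len n_def by simp
  have edge: "{xs ! i, xs ! (if i + 1 < n then i + 1 else 0)} \<in> ?T" if "i < n" for i
  proof (cases "i + 1 < n")
    case True
    then show ?thesis using w unfolding walk_def n_def by simp
  next
    case False
    then have "i = n - 1" using that by simp
    moreover have "xs ! (n - 1) = last xs" using n3 n_def by (subst last_conv_nth) auto
    moreover have "xs ! 0 = hd xs" using n3 n_def by (subst hd_conv_nth) auto
    ultimately show ?thesis using cl n3 False by (simp add: insert_commute)
  qed
  have "\<not> set xs \<subseteq> {a,b}"
  proof
    assume "set xs \<subseteq> {a,b}"
    then have "card (set xs) \<le> card {a,b}" by (rule card_mono[rotated]) simp
    also have "\<dots> \<le> 2" by (simp add: card_insert_le_m1)
    finally show False using dis len by (simp add: distinct_card)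
  qed
  then obtain x where "x \<in> set xs" "x \<notin> {a,b}" by blast
  then obtain i where i: "i < n" "xs ! i \<noteq> a" "xs ! i \<noteq> b"
    unfolding n_def by (metis in_set_conv_nth insertCI)
  define j where "j = (if i + 1 < n then i + 1 else 0)"
  define k where "k = (if i = 0 then n - 1 else i - 1)"
  have kj: "(if k + 1 < n then k + 1 else 0) = i" using i(1) n3 unfolding k_def by auto
  have jk: "j \<noteq> k" using i(1) n3 unfolding j_def k_def by auto
  have kn: "k < n" "j < n" using n3 i(1) unfolding k_def j_def by auto
  have e1: "{xs ! i, xs ! j} \<in> ?T" using edge[OF i(1)] unfolding j_def .
  have e2: "{xs ! i, xs ! k} \<in> ?T" using edge[OF kn(1)] unfolding kj by (simp add: insert_commute)
  have "xs ! j = xs ! k"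
    using dstar_nb[OF e1 i(2,3) assms] dstar_nb[OF e2 i(2,3) assms] by simp
  then show False using dis kn jk n_def by (simp add: nth_eq_iff_index_eq)
qed



lemma dstar_diam:
  assumes "A \<subseteq> P - {a,b}" "a \<in> P" "b \<in> P" "a \<noteq> b"
  shows "diameter_le P (dstar a b A P) 3"
  unfolding diameter_le_def
proof (intro ballI)
  let ?T = "dstar a b A P"
  fix u v assume u: "u \<in> P" and v: "v \<in> P"
  have eab: "{a,b} \<in> ?T" "{b,a} \<in> ?T" by (auto simp: dstar_def insert_commute)
  have ea: "\<And>x. x \<in> A \<Longrightarrow> {a,x} \<in> ?T \<and> {x,a} \<in> ?T" by (auto simp: dstar_def insert_commute)
  have eb: "\<And>x. x \<in> P \<Longrightarrow> x \<noteq> a \<Longrightarrow> x \<noteq> b \<Longrightarrow> x \<notin> A \<Longrightarrow> {b,x} \<in> ?T \<and> {x,b} \<in> ?T"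
    by (auto simp: dstar_def insert_commute)
  show "\<exists>xs. walk ?T xs \<and> hd xs = u \<and> last xs = v \<and> length xs \<le> 3 + 1"
  proof (cases "u = v")
    case True then show ?thesis by (intro exI[of _ "[u]"]) (simp add: walk1)
  next
    case False
    consider "u = a" | "u = b" | "u \<in> A" | "u \<noteq> a \<and> u \<noteq> b \<and> u \<notin> A" by blast
    then show ?thesis
    proof cases
      case 1
      note uu = this
      consider "v = a" | "v = b" | "v \<in> A" | "v \<noteq> a \<and> v \<noteq> b \<and> v \<notin> A" by blast
      then show ?thesis
      proof cases
        case 1
        then show ?thesis using uu False by simp
      next
        case 2
        then show ?thesis using uu u v by (intro exI[of _ "[a, b]"]) (simp add: walk2 eab ea eb)
      next
        case 3
        then show ?thesis using uu u v by (intro exI[of _ "[a, v]"]) (simp add: walk2 eab ea eb)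
      next
        case 4
        then show ?thesis using uu u v by (intro exI[of _ "[a, b, v]"]) (simp add: walk3 eab ea eb)
      qed
    next
      case 2
      note uu = this
      consider "v = a" | "v = b" | "v \<in> A" | "v \<noteq> a \<and> v \<noteq> b \<and> v \<notin> A" by blast
      then show ?thesis
      proof cases
        case 1
        then show ?thesis using uu u v by (intro exI[of _ "[b, a]"]) (simp add: walk2 eab ea eb)
      next
        case 2
        then show ?thesis using uu False by simp
      next
        case 3
        then show ?thesis using uu u v by (intro exI[of _ "[b, a, v]"]) (simp add: walk3 eab ea eb)
      next
        case 4
        then show ?thesis using uu u v by (intro exI[of _ "[b, v]"]) (simp add: walk2 eab ea eb)
      qed
    next
      case 3
      note uu = this
      consider "v = a" | "v = b" | "v \<in> A" | "v \<noteq> a \<and> v \<noteq> b \<and> v \<notin> A" by blast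
      then show ?thesis
      proof cases
        case 1
        then show ?thesis using uu u v by (intro exI[of _ "[u, a]"]) (simp add: walk2 eab ea eb)
      next
        case 2
        then show ?thesis using uu u v by (intro exI[of _ "[u, a, b]"]) (simp add: walk3 eab ea eb)
      next
        case 3
        then show ?thesis using uu u v by (intro exI[of _ "[u, a, v]"]) (simp add: walk3 eab ea eb)
      next
        case 4
        then show ?thesis using uu u v by (intro exI[of _ "[u, a, b, v]"]) (simp add: walk4 eab ea eb)
      qed
    next
      case 4
      note uu = this
      consider "v = a" | "v = b" | "v \<in> A" | "v \<noteq> a \<and> v \<noteq> b \<and> v \<notin> A" by blast
      then show ?thesis
      proof cases
        case 1
        then show ?thesis using uu u v by (intro exI[of _ "[u, b, a]"]) (simp add: walk3 eab ea eb)
      next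
        case 2
        then show ?thesis using uu u v by (intro exI[of _ "[u, b]"]) (simp add: walk2 eab ea eb)
      next
        case 3
        then show ?thesis using uu u v by (intro exI[of _ "[u, b, a, v]"]) (simp add: walk4 eab ea eb)
      next
        case 4
        then show ?thesis using uu u v by (intro exI[of _ "[u, b, v]"]) (simp add: walk3 eab ea eb)
      qed
    qed
  qed
qed


lemma dstar_simple:
  assumes gp: "general_position P" and A: "A \<subseteq> P - {a,b}" and ab: "a \<in> P" "b \<in> P" "a \<noteq> b"
    and nc: "\<And>x y. x \<in> A \<Longrightarrow> y \<in> P - {a,b} - A \<Longrightarrow> closed_segment a x \<inter> closed_segment b y = {}"
  shows "simple_graph (dstar a b A P)"
  unfolding simple_graph_def crossing_def
proof (intro ballI impI notI)
  let ?R = "P - {a,b} - A"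
  fix e f assume e: "e \<in> dstar a b A P" and f: "f \<in> dstar a b A P" and ef: "e \<noteq> f"
    and bad: "\<not> seg e \<inter> seg f \<subseteq> e \<inter> f"
  have fan: "closed_segment u v \<inter> closed_segment u w \<subseteq> {u}"
    if "u \<in> P" "v \<in> P" "w \<in> P" "u \<noteq> v" "v \<noteq> w" "u \<noteq> w" for u v w
    using seg_fan gp_orient[OF gp that] by blast
  have cs: "closed_segment u v = closed_segment v u" for u v by (rule closed_segment_commute)
  have et: "e = {a,b} \<or> (\<exists>x\<in>A. e = {a,x}) \<or> (\<exists>y\<in>?R. e = {b,y})" using e unfolding dstar_def by auto
  have ft: "f = {a,b} \<or> (\<exists>x\<in>A. f = {a,x}) \<or> (\<exists>y\<in>?R. f = {b,y})" using f unfolding dstar_def by auto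
  have AP: "\<And>x. x \<in> A \<Longrightarrow> x \<in> P \<and> x \<noteq> a \<and> x \<noteq> b" using A by auto
  show False
    using et ft
  proof (elim disjE bexE)
    assume "e = {a,b}" "f = {a,b}" then show False using ef by simp
  next
    fix x assume "e = {a,b}" "x \<in> A" "f = {a,x}"
    then show False using bad fan[of a b x] ab AP[of x] by (auto simp: seg_pair)
  next
    fix y assume "e = {a,b}" "y \<in> ?R" "f = {b,y}"
    then show False using bad fan[of b a y] ab by (auto simp: seg_pair cs[of a b])
  next
    fix x assume "f = {a,b}" "x \<in> A" "e = {a,x}"
    then show False using bad fan[of a b x] ab AP[of x] by (auto simp: seg_pair)
  next
    fix y assume "f = {a,b}" "y \<in> ?R" "e = {b,y}"
    then show False using bad fan[of b a y] ab by (auto simp: seg_pair cs[of a b])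
  next
    fix x x' assume "x \<in> A" "e = {a,x}" "x' \<in> A" "f = {a,x'}"
    then show False using bad fan[of a x x'] ab AP[of x] AP[of x'] ef by (auto simp: seg_pair)
  next
    fix y y' assume "y \<in> ?R" "e = {b,y}" "y' \<in> ?R" "f = {b,y'}"
    then show False using bad fan[of b y y'] ab ef by (auto simp: seg_pair)
  next
    fix x y assume "x \<in> A" "e = {a,x}" "y \<in> ?R" "f = {b,y}"
    then show False using bad nc[of x y] by (auto simp: seg_pair)
  next
    fix x y assume "x \<in> A" "f = {a,x}" "y \<in> ?R" "e = {b,y}"
    then show False using bad nc[of x y] by (auto simp: seg_pair)
  qed
qed

lemma dstar_ok:
  assumes gp: "general_position P" and A: "A \<subseteq> P - {a,b}" and ab: "a \<in> P" "b \<in> P" "a \<noteq> b"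
    and nc: "\<And>x y. x \<in> A \<Longrightarrow> y \<in> P - {a,b} - A \<Longrightarrow> closed_segment a x \<inter> closed_segment b y = {}"
  shows "dstar a b A P \<in> simple_trees_le P 3"
proof -
  have d: "diameter_le P (dstar a b A P) 3" by (rule dstar_diam[OF A ab])
  have c: "connected_on P (dstar a b A P)"
    using d unfolding diameter_le_def connected_on_def by blast
  have ce: "{u,v} \<in> complete_edges P" if "u \<in> P" "v \<in> P" "u \<noteq> v" for u v
    using that unfolding complete_edges_def by blast
  have sub: "dstar a b A P \<subseteq> complete_edges P"
  proof
    fix e assume "e \<in> dstar a b A P"
    then have "e = {a,b} \<or> (\<exists>x\<in>A. e = {a,x}) \<or> (\<exists>y\<in>P - {a,b} - A. e = {b,y})"
      unfolding dstar_def by auto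
    then show "e \<in> complete_edges P" using A ab ce by blast
  qed
  show ?thesis unfolding simple_trees_le_def spanning_tree_def
    using d c sub dstar_nocycle[OF A] dstar_simple[OF assms] by blast
qed



lemma sgn_opp: "(X::real) * D > 0 \<Longrightarrow> Y * D < 0 \<Longrightarrow> X * Y < 0"
  by (auto simp: zero_less_mult_iff mult_less_0_iff)
lemma sgn_same: "(X::real) * Y > 0 \<Longrightarrow> Y * Z > 0 \<Longrightarrow> X * Z > 0"
  by (auto simp: zero_less_mult_iff)

lemma sq_pos: "(X::real) \<noteq> 0 \<Longrightarrow> X * X > 0"
  by (metis mult_neg_neg mult_pos_pos linorder_neq_iff)

definition noncross :: "point set \<Rightarrow> point \<Rightarrow> point \<Rightarrow> point set \<Rightarrow> bool" where
  "noncross P a b A \<longleftrightarrow> (\<forall>x\<in>A. \<forall>y\<in>P - {a,b} - A. closed_segment a x \<inter> closed_segment b y = {})"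

lemma A_opp:
  assumes gp: "general_position P" and P: "a \<in> P" "b \<in> P" "c \<in> P" "d \<in> P"
    and dist: "distinct [a,b,c,d]" and opp: "orient a b c * orient a b d < 0"
  shows "\<exists>A. A \<subseteq> P - {a,b} \<and> d \<in> A \<and> c \<notin> A \<and> noncross P a b A"
proof -
  let ?D = "orient a b d"
  define A where "A = {x \<in> P - {a,b}. orient a b x * ?D > 0}"
  have D0: "?D \<noteq> 0" using gp_orient[OF gp P(1,2,4)] dist by auto
  have "d \<in> A" using P dist sq_pos[OF D0] unfolding A_def by auto
  moreover have "c \<notin> A" using opp unfolding A_def by auto
  moreover have "noncross P a b A"
    unfolding noncross_def
  proof (intro ballI)
    fix x y assume x: "x \<in> A" and y: "y \<in> P - {a,b} - A"
    have y0: "orient a b y \<noteq> 0" using gp_orient[OF gp P(1,2), of y] y dist by auto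
    have "orient a b y * ?D \<noteq> 0" using y0 D0 by simp
    moreover have "\<not> orient a b y * ?D > 0" using y unfolding A_def by auto
    ultimately have "orient a b y * ?D < 0" by linarith
    then have "orient a b x * orient a b y < 0" using x unfolding A_def by (auto intro: sgn_opp)
    then show "closed_segment a x \<inter> closed_segment b y = {}" using seg_opp dist by auto
  qed
  moreover have "A \<subseteq> P - {a,b}" unfolding A_def by blast
  ultimately show ?thesis by blast
qed

lemma A_same:
  assumes gp: "general_position P" and P: "a \<in> P" "b \<in> P" "c \<in> P" "d \<in> P"
    and dist: "distinct [a,b,c,d]" and same: "orient a b d * orient a b c > 0"
    and cond: "orient a b d * orient a d c < 0"
  shows "\<exists>A. A \<subseteq> P - {a,b} \<and> d \<in> A \<and> c \<notin> A \<and> noncross P a b A"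
proof -
  let ?D = "orient a b d"
  define A where "A = {x \<in> P - {a,b}. orient a b x * ?D < 0 \<or> x = d \<or>
      (orient a b x * ?D > 0 \<and> ?D * orient a d x > 0)}"
  have D0: "?D \<noteq> 0" using gp_orient[OF gp P(1,2,4)] dist by auto
  have "d \<in> A" using P dist unfolding A_def by auto
  moreover have "c \<notin> A"
  proof
    assume "c \<in> A"
    moreover have "orient a b c * ?D > 0" using same by (simp add: mult.commute)
    ultimately show False using cond dist unfolding A_def by auto
  qed
  moreover have "noncross P a b A"
    unfolding noncross_def
  proof (intro ballI)
    fix x y assume x: "x \<in> A" and y: "y \<in> P - {a,b} - A"
    have y0: "orient a b y \<noteq> 0" using gp_orient[OF gp P(1,2), of y] y dist by auto
    have yd0: "orient a d y \<noteq> 0" using gp_orient[OF gp P(1,4), of y] y dist unfolding A_def by auto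
    have "orient a b y * ?D \<noteq> 0" using y0 D0 by simp
    moreover have "\<not> orient a b y * ?D < 0" using y unfolding A_def by auto
    ultimately have yD: "orient a b y * ?D > 0" by linarith
    have "?D * orient a d y \<noteq> 0" using yd0 D0 by simp
    moreover have "\<not> ?D * orient a d y > 0" using y yD unfolding A_def by auto
    ultimately have ydD: "?D * orient a d y < 0" by linarith
    have yA: "y \<notin> A" "y \<in> P" "y \<noteq> a" "y \<noteq> b" using y by auto
    have xP: "x \<in> P" "x \<noteq> a" "x \<noteq> b" using x unfolding A_def by auto
    show "closed_segment a x \<inter> closed_segment b y = {}"
    proof (rule ccontr)
      assume "closed_segment a x \<inter> closed_segment b y \<noteq> {}"
      then obtain p where p: "p \<in> closed_segment a x" "p \<in> closed_segment b y" by blast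
      have kD: "?D * ?D > 0" using sq_pos[OF D0] .
      have kY: "?D * orient a b y > 0" using yD by (simp add: mult.commute)
      consider "orient a b x * ?D < 0" | "x = d" | "orient a b x * ?D > 0 \<and> ?D * orient a d x > 0"
        using x unfolding A_def by blast
      then show False
      proof cases
        case 1
        then have "orient a b x * orient a b y < 0"
          using yD by (metis sgn_opp mult.commute)
        then show False using seg_opp[of a b x y] dist p by auto
      next
        case 2
        have "?D * orient a d y > 0" using seg_cross[OF kD kY yd0] p 2 by simp
        then show False using ydD by simp
      next
        case 3
        have xy: "x \<noteq> y" using x yA by auto
        have xy0: "orient a x y \<noteq> 0" using gp_orient[OF gp P(1) xP(1) yA(2)] xP yA xy by auto
        have kX: "?D * orient a b x > 0" using 3 by (simp add: mult.commute)
        have "?D * orient a x y > 0" using seg_cross[OF kX kY xy0 p] .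
        then have "?D * orient a d y > 0" using orient_trans[OF kD kX kY] 3 by simp
        then show False using ydD by simp
      qed
    qed
  qed
  moreover have "A \<subseteq> P - {a,b}" unfolding A_def by blast
  ultimately show ?thesis by blast
qed



lemma hull_sep:
  assumes "orient q r x * orient q r y < 0"
  shows "x \<notin> convex hull {q, r, y}"
proof
  assume "x \<in> convex hull {q, r, y}"
  then obtain u v w where uvw: "0 \<le> w" "u + v + w = 1" "x = u *\<^sub>R q + v *\<^sub>R r + w *\<^sub>R y"
    unfolding convex_hull_3 by blast
  have "orient q r x = w * orient q r y"
    unfolding uvw(3) orient_affine3[OF uvw(2)] by simp
  then have "orient q r x * orient q r y = w * (orient q r y * orient q r y)" by simp
  also have "\<dots> \<ge> 0" using uvw(1) by simp
  finally show False using assms by simp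
qed

lemma leaf_edge:
  assumes "finite B" "leaf B a" "{a,c} \<in> B" "e \<in> B" "a \<in> e"
  shows "e = {a,c}"
proof -
  have "card {e\<in>B. a \<in> e} = 1" using assms(2) unfolding leaf_def degree_def .
  then obtain z where z: "{e\<in>B. a \<in> e} = {z}" by (rule card_1_singletonE)
  have "{a,c} \<in> {e\<in>B. a \<in> e}" using assms(3) by simp
  then have 1: "{a,c} = z" using z by simp
  have "e \<in> {e\<in>B. a \<in> e}" using assms(4,5) by simp
  then have "e = z" using z by simp
  then show ?thesis using 1 by simp
qed

lemma in_complete:
  assumes "{u,v} \<in> complete_edges P" shows "u \<in> P \<and> v \<in> P"
proof -
  obtain x y where xy: "{u,v} = {x,y}" "x \<in> P" "y \<in> P"
    using assms unfolding complete_edges_def by blast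
  have "u \<in> {x,y}" "v \<in> {x,y}" unfolding xy(1)[symmetric] by simp_all
  then show ?thesis using xy(2,3) by blast
qed

theorem corollary1:
  fixes P :: "point set" and B :: "point set set" and a b c d :: point
  assumes "finite P"
    and "general_position P"
    and "blocker P B (simple_trees_le P 3)"
    and "leaf B a" and "{a, c} \<in> B"
    and "leaf B b" and "{b, d} \<in> B"
    and "distinct [a, b, c, d]"
  shows "convex_position {a, b, d, c} \<and> convex_quadrilateral a b d c"
proof -
  note gp = assms(2) and dist = assms(8)
  have Bsub: "B \<subseteq> complete_edges P" and bl: "blocks B (simple_trees_le P 3)"
    using assms(3) unfolding blocker_def by auto
  have "complete_edges P \<subseteq> Pow P" unfolding complete_edges_def by auto
  then have finB: "finite B" using Bsub assms(1) by (meson finite_Pow_iff finite_subset order_trans)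
  have P: "a \<in> P" "b \<in> P" "c \<in> P" "d \<in> P"
    using in_complete Bsub assms(5,7) by blast+
  have noA: "\<not> (\<exists>A. A \<subseteq> P - {a,b} \<and> d \<in> A \<and> c \<notin> A \<and> noncross P a b A)"
  proof
    assume "\<exists>A. A \<subseteq> P - {a,b} \<and> d \<in> A \<and> c \<notin> A \<and> noncross P a b A"
    then obtain A where A: "A \<subseteq> P - {a,b}" "d \<in> A" "c \<notin> A" "noncross P a b A" by blast
    have "dstar a b A P \<in> simple_trees_le P 3"
      using dstar_ok[OF gp A(1) P(1,2)] dist A(4) unfolding noncross_def by auto
    then obtain e where e: "e \<in> B" "e \<in> dstar a b A P" using bl unfolding blocks_def by blast
    then have "e = {a,b} \<or> (\<exists>x\<in>A. e = {a,x}) \<or> (\<exists>y\<in>P - {a,b} - A. e = {b,y})"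
      unfolding dstar_def by auto
    then show False
    proof (elim disjE bexE)
      assume "e = {a,b}"
      then have "e = {a,c}" using leaf_edge[OF finB assms(4,5) e(1)] by simp
      then show False using \<open>e = {a,b}\<close> dist by (auto simp: doubleton_eq_iff)
    next
      fix x assume x: "x \<in> A" "e = {a,x}"
      then have "e = {a,c}" using leaf_edge[OF finB assms(4,5) e(1)] by simp
      then show False using x A(3) dist by (auto simp: doubleton_eq_iff)
    next
      fix y assume y: "y \<in> P - {a,b} - A" "e = {b,y}"
      then have "e = {b,d}" using leaf_edge[OF finB assms(6,7) e(1)] by simp
      then show False using y A(2) dist by (auto simp: doubleton_eq_iff)
    qed
  qed
  define C where "C = orient a b c"
  define D where "D = orient a b d"
  define E where "E = orient a d c"
  define F where "F = orient b c d"
  have C0: "C \<noteq> 0" unfolding C_def using gp_orient[OF gp P(1,2,3)] dist by auto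
  have D0: "D \<noteq> 0" unfolding D_def using gp_orient[OF gp P(1,2,4)] dist by auto
  have E0: "E \<noteq> 0" unfolding E_def using gp_orient[OF gp P(1,4,3)] dist by auto
  have F0: "F \<noteq> 0" unfolding F_def using gp_orient[OF gp P(2,3,4)] dist by auto
  have "\<not> C * D < 0" using A_opp[OF gp P dist] noA unfolding C_def D_def by blast
  moreover have "C * D \<noteq> 0" using C0 D0 by simp
  ultimately have CD: "C * D > 0" by linarith
  have DC: "D * C > 0" using CD by (simp add: mult.commute)
  have "\<not> D * E < 0" using A_same[OF gp P dist] noA DC unfolding C_def D_def E_def by blast
  moreover have "D * E \<noteq> 0" using D0 E0 by simp
  ultimately have DE: "D * E > 0" by linarith
  have obac: "orient b a c = - C" unfolding C_def by (simp add: orient_def algebra_simps)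
  have obad: "orient b a d = - D" unfolding D_def by (simp add: orient_def algebra_simps)
  have dist2: "distinct [b, a, d, c]" using dist by auto
  have noA2: "\<not> (\<exists>A'. A' \<subseteq> P - {b,a} \<and> c \<in> A' \<and> d \<notin> A' \<and> noncross P b a A')"
  proof
    assume "\<exists>A'. A' \<subseteq> P - {b,a} \<and> c \<in> A' \<and> d \<notin> A' \<and> noncross P b a A'"
    then obtain A' where A': "A' \<subseteq> P - {b,a}" "c \<in> A'" "d \<notin> A'" "noncross P b a A'" by blast
    let ?A = "P - {a,b} - A'"
    have eq: "P - {a,b} - ?A = A'" using A' by auto
    have "?A \<subseteq> P - {a,b}" "d \<in> ?A" "c \<notin> ?A" using A' P dist by auto
    moreover have "noncross P a b ?A" unfolding noncross_def eq
    proof (intro ballI)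
      fix x y assume "x \<in> ?A" "y \<in> A'"
      moreover have "P - {b,a} - A' = ?A" by auto
      ultimately show "closed_segment a x \<inter> closed_segment b y = {}"
        using A'(4) unfolding noncross_def by auto
    qed
    ultimately show False using noA by blast
  qed
  have "\<not> (orient b a c * orient b c d < 0)"
  proof
    assume h: "orient b a c * orient b c d < 0"
    have "orient b a c * orient b a d > 0" using CD obac obad by simp
    then show False using A_same[OF gp P(2,1,4,3) dist2 _ h] noA2 by blast
  qed
  then have "\<not> (- C) * F < 0" using obac unfolding F_def by simp
  moreover have "(- C) * F \<noteq> 0" using C0 F0 by simp
  ultimately have CF: "(- C) * F > 0" by linarith
  have o1: "orient b d c = - F" "orient b d a = D" "orient d c a = E" "orient d c b = - F"
    "orient c a b = C" "orient c a d = E" "orient b c a = C" "orient a d b = - D"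
    unfolding C_def D_def E_def F_def by (simp_all add: orient_def algebra_simps)
  have CFn: "C * F < 0" using CF by simp
  have s1: "D * C > 0" by (rule DC)
  have "(- F) * C > 0" using CF by (simp add: algebra_simps)
  then have s2: "(- F) * D > 0" using CD by (rule sgn_same)
  have s4: "C * E > 0" using CD DE by (rule sgn_same)
  have "E * D > 0" using DE by (simp add: mult.commute)
  moreover have "D * (- F) > 0" using s2 by (simp add: mult.commute)
  ultimately have s3: "E * (- F) > 0" by (rule sgn_same)
  have cp: "convex_position {a, b, d, c}"
    unfolding convex_position_def
  proof (intro ballI)
    fix x assume "x \<in> {a, b, d, c}"
    then consider "x = a" | "x = b" | "x = d" | "x = c" by blast
    then show "x \<notin> convex hull ({a, b, d, c} - {x})"
    proof cases
      case 1
      have "{a, b, d, c} - {x} = {b, c, d}" using 1 dist by auto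
      moreover have "orient b c a * orient b c d < 0" using o1 CFn unfolding F_def by simp
      ultimately show ?thesis using 1 hull_sep by simp
    next
      case 2
      have "{a, b, d, c} - {x} = {a, d, c}" using 2 dist by auto
      moreover have "orient a d b * orient a d c < 0" using o1 DE unfolding E_def by simp
      ultimately show ?thesis using 2 hull_sep by simp
    next
      case 3
      have "{a, b, d, c} - {x} = {b, c, a}" using 3 dist by auto
      moreover have "orient b c d * orient b c a < 0" using o1 CFn unfolding F_def by (simp add: mult.commute)
      ultimately show ?thesis using 3 hull_sep by simp
    next
      case 4
      have "{a, b, d, c} - {x} = {a, d, b}" using 4 dist by auto
      moreover have "orient a d c * orient a d b < 0" using o1 DE unfolding E_def by (simp add: mult.commute)
      ultimately show ?thesis using 4 hull_sep by simp
    qed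
  qed
  have "convex_quadrilateral a b d c"
    unfolding convex_quadrilateral_def same_side_def
    using cp dist s1 s2 s3 s4 o1 unfolding D_def C_def by (simp add: eq_commute[of d c])
  then show ?thesis using cp by simp
qed

end
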